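(* Let $r$ be a prime power and $q=r^2$. If there exist linear codes $C_1$ and $C_2$ over $\mathbb{F}_q$ with parameters $[m,k_1,d_1]_q$ and $[m,k_2,d_2]_q$ such that $C_1\subseteq C_2^{\perp_H}$, then there exists a Hermitian self-orthogonal linear code over $\mathbb{F}_q$ with parameters $[2m,k_1+k_2,d]_q$ where $d\ge\min\{2d_1,d_2\}$.
   Context: For $a\in\mathbb{F}_q$, $\overline{a}:=a^r$. The Hermitian inner product on $\mathbb{F}_q^n$ is $\langle u,v\rangle_H=\sum_i u_i\overline{v_i}$, and $C^{\perp_H}=\{v:\langle u,v\rangle_H=0\ \forall u\in C\}$; $C$ is Hermitian self-orthogonal if $C\subseteq C^{\perp_H}$. A code with parameters $[n,k,d]_q$ is a linear code of length $n$, dimension $k$ and minimum Hamming weight $d$ over $\mathbb{F}_q$. *)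

theory Defs
  imports Complex_Main "HOL-Library.Function_Algebras" "HOL-Computational_Algebra.Primes"
begin

text \<open>Vectors of length n over a field are represented as functions nat => 'a
  vanishing outside {0..<n}; addition/zero are pointwise (Function_Algebras).\<close>

definition vsmult :: "'a::field \<Rightarrow> (nat \<Rightarrow> 'a) \<Rightarrow> (nat \<Rightarrow> 'a)" where
  "vsmult c v = (\<lambda>i. c * v i)"

lemma vector_space_vsmult: "vector_space (vsmult :: 'a::field \<Rightarrow> _)"
  by unfold_locales (auto simp: vsmult_def fun_eq_iff algebra_simps)

definition vecs :: "nat \<Rightarrow> (nat \<Rightarrow> 'a::zero) set" where
  "vecs n = {v. \<forall>i\<ge>n. v i = 0}"

definition hweight :: "nat \<Rightarrow> (nat \<Rightarrow> 'a::zero) \<Rightarrow> nat" where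
  "hweight n v = card {i. i < n \<and> v i \<noteq> 0}"

definition linear_code :: "nat \<Rightarrow> (nat \<Rightarrow> 'a::field) set \<Rightarrow> bool" where
  "linear_code n C \<longleftrightarrow> C \<subseteq> vecs n \<and> module.subspace vsmult C"

definition code_dim :: "(nat \<Rightarrow> 'a::field) set \<Rightarrow> nat" where
  "code_dim C = vector_space.dim vsmult C"

definition min_dist :: "nat \<Rightarrow> (nat \<Rightarrow> 'a::field) set \<Rightarrow> nat" where
  "min_dist n C = Inf (hweight n ` (C - {0}))"

definition is_nkd_code :: "nat \<Rightarrow> nat \<Rightarrow> nat \<Rightarrow> (nat \<Rightarrow> 'a::field) set \<Rightarrow> bool" where
  "is_nkd_code n k d C \<longleftrightarrow> linear_code n C \<and> code_dim C = k \<and> min_dist n C = d"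

text \<open>Hermitian inner product, with conjugation a |-> a^r.\<close>
definition herm_ip :: "nat \<Rightarrow> nat \<Rightarrow> (nat \<Rightarrow> 'a::field) \<Rightarrow> (nat \<Rightarrow> 'a) \<Rightarrow> 'a" where
  "herm_ip r n u v = (\<Sum>i<n. u i * (v i) ^ r)"

definition herm_dual :: "nat \<Rightarrow> nat \<Rightarrow> (nat \<Rightarrow> 'a::field) set \<Rightarrow> (nat \<Rightarrow> 'a) set" where
  "herm_dual r n C = {v \<in> vecs n. \<forall>u\<in>C. herm_ip r n u v = 0}"

definition herm_self_orth :: "nat \<Rightarrow> nat \<Rightarrow> (nat \<Rightarrow> 'a::field) set \<Rightarrow> bool" where
  "herm_self_orth r n C \<longleftrightarrow> C \<subseteq> herm_dual r n C"

definition prime_power :: "nat \<Rightarrow> bool" where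
  "prime_power r \<longleftrightarrow> (\<exists>p e. prime p \<and> e > 0 \<and> r = p ^ e)"

end

theory Submission
  imports Defs "HOL-Number_Theory.Residues" "HOL-Computational_Algebra.Polynomial" "HOL-Library.FuncSet"
begin


lemma ff_power_card:
  fixes x :: "'a :: {finite,field}"
  shows "x ^ card (UNIV :: 'a set) = x"
proof (cases "x = 0")
  case False
  have "x * (\<Prod>y\<in>UNIV-{0}. x * y) = x * x ^ (card (UNIV :: 'a set) - 1) * \<Prod>(UNIV-{0})"
    by (simp add: prod.distrib mult_ac)
  also have "x * x ^ (card (UNIV :: 'a set) - 1) = x ^ Suc (card (UNIV :: 'a set) - 1)"
    by (subst power_Suc) auto
  also have "Suc (card (UNIV :: 'a set) - 1) = card (UNIV :: 'a set)"
    using finite_UNIV_card_ge_0[where ?'a = 'a] by simp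
  also have "(\<Prod>y\<in>UNIV-{0}. x * y) = (\<Prod>y\<in>UNIV-{0}. y)"
    by (rule prod.reindex_bij_witness[of _ "\<lambda>y. y / x" "\<lambda>y. x * y"]) (use False in auto)
  finally show ?thesis
    by simp
qed (use finite_UNIV_card_ge_0[where ?'a = 'a] in auto)

lemma ff_char:
  assumes "prime p" "e > 0" "card (UNIV :: 'a :: {finite,field} set) = (p ^ e) ^ 2"
  shows "CHAR('a) = p"
proof -
  have pos: "CHAR('a) > 0" by (simp add: finite_imp_CHAR_pos)
  have pr: "prime CHAR('a)" using pos prime_CHAR_semidom by blast
  have "CHAR('a) dvd p ^ (e * 2)" using CHAR_dvd_CARD[where 'a='a] assms(3)
    by (simp add: power_mult)
  hence "CHAR('a) dvd p" using pr prime_dvd_power by blast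
  thus ?thesis using pr assms(1) primes_dvd_imp_eq by blast
qed

lemma roots_bound:
  fixes c :: "'a :: field"
  assumes "n \<ge> 1"
  shows "card {x. x ^ n = c} \<le> n"
proof -
  define P where "P = monom (1::'a) n - [:c:]"
  have "coeff P n = 1" using assms by (cases n) (auto simp: P_def)
  hence nz: "P \<noteq> 0" by auto
  have "degree P \<le> n" unfolding P_def
    by (metis degree_diff_le degree_monom_le degree_pCons_0 le0 le_trans)
  moreover have "{x. x ^ n = c} = {x. poly P x = 0}" by (auto simp: P_def poly_monom)
  ultimately show ?thesis using card_poly_roots_bound[OF nz] by simp
qed

lemma norm_sols:
  fixes dummy :: "'a :: {finite,field}"
  assumes r2: "r \<ge> 2" and card: "card (UNIV :: 'a set) = r * r"
    and m1: "(-1 :: 'a) ^ r = -1"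
  shows "\<exists>a b :: 'a. a \<noteq> b \<and> a ^ (r+1) = -1 \<and> b ^ (r+1) = -1"
proof -
  define S where "S = (UNIV :: 'a set) - {0}"
  define T where "T = {y :: 'a. y ^ (r - 1) = 1}"
  define fib where "fib y = {x \<in> S. x ^ (r+1) = y}" for y
  have cS: "card S = r * r - 1" unfolding S_def using card by (simp add: card_Diff_singleton)
  have cT: "card T \<le> r - 1" unfolding T_def by (rule roots_bound) (use r2 in auto)
  have cf: "card (fib y) \<le> r + 1" for y
  proof -
    have "card (fib y) \<le> card {x. x ^ (r+1) = y}" by (rule card_mono) (auto simp: fib_def)
    also have "\<dots> \<le> r + 1" by (rule roots_bound) auto
    finally show ?thesis .
  qed
  have into: "x ^ (r+1) \<in> T" if "x \<in> S" for x
  proof -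
    have x0: "x \<noteq> 0" using that S_def by auto
    have "x ^ (r*r) = x" using ff_power_card[of x] card by simp
    moreover have "r * r = Suc ((r+1)*(r-1))" using r2
      by (cases r) (auto simp: algebra_simps)
    ultimately have "x * x ^ ((r+1)*(r-1)) = x * 1" by simp
    hence "x ^ ((r+1)*(r-1)) = 1" using x0 by simp
    hence "(x ^ (r+1)) ^ (r-1) = 1" by (simp only: power_mult)
    thus ?thesis unfolding T_def mem_Collect_eq .
  qed
  have mT: "(-1::'a) \<in> T"
  proof -
    have "(-1::'a) ^ Suc (r - 1) = -1" using m1 r2 by (simp del: power_Suc)
    hence "- ((-1::'a) ^ (r - 1)) = -1" by simp
    thus ?thesis by (simp add: T_def)
  qed
  have "S = (\<Union>y\<in>T. fib y)" using into by (auto simp: fib_def)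
  moreover have "card (\<Union>y\<in>T. fib y) = (\<Sum>y\<in>T. card (fib y))"
    by (rule card_UN_disjoint) (auto simp: fib_def)
  ultimately have "card S = (\<Sum>y\<in>T. card (fib y))" by simp
  also have "\<dots> = card (fib (-1)) + (\<Sum>y\<in>T-{-1}. card (fib y))"
    using mT by (simp add: sum.remove)
  finally have eq: "card S = card (fib (-1)) + (\<Sum>y\<in>T-{-1}. card (fib y))" .
  have "(\<Sum>y\<in>T-{-1}. card (fib y)) \<le> (\<Sum>y\<in>T-{-1}. r + 1)" by (rule sum_mono) (rule cf)
  also have "\<dots> = (card T - 1) * (r + 1)" using mT by (simp add: card_Diff_singleton)
  also have "\<dots> \<le> (r - 2) * (r + 1)" using cT by (intro mult_right_mono) auto
  finally have le: "(\<Sum>y\<in>T-{-1}. card (fib y)) \<le> (r - 2) * (r + 1)" .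
  have "r * r - 1 = (r - 2) * (r + 1) + (r + 1)" using r2
    by (cases r; cases "r - 1") (auto simp: algebra_simps)
  hence "card (fib (-1)) \<ge> 2" using eq le cS r2 by linarith
  then obtain a b where "a \<in> fib (-1)" "b \<in> fib (-1)" "a \<noteq> b"
    by (metis One_nat_def card_le_Suc_iff numeral_2_eq_2 insert_iff)
  thus ?thesis by (auto simp: fib_def)
qed



lemma vecs_finite: "finite (vecs n :: (nat \<Rightarrow> 'a::{finite,zero}) set)"
proof -
  define h where "h g = (\<lambda>i. if i < n then g i else (0::'a))" for g :: "nat \<Rightarrow> 'a"
  have "vecs n \<subseteq> h ` (PiE {..<n} (\<lambda>_. UNIV))"
  proof
    fix v :: "nat \<Rightarrow> 'a" assume "v \<in> vecs n"
    hence "v = h (restrict v {..<n})" unfolding fun_eq_iff h_def vecs_def by simp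
    moreover have "restrict v {..<n} \<in> PiE {..<n} (\<lambda>_. UNIV)" by simp
    ultimately show "v \<in> h ` (PiE {..<n} (\<lambda>_. UNIV))" by (metis rev_image_eqI)
  qed
  moreover have "finite (h ` (PiE {..<n} (\<lambda>_. (UNIV::'a set))))" by (intro finite_imageI finite_PiE) auto
  ultimately show ?thesis by (rule finite_subset)
qed

lemma card_subspace:
  fixes V :: "(nat \<Rightarrow> 'a::{finite,field}) set"
  assumes sub: "module.subspace vsmult V" and fin: "finite V"
  shows "card V = card (UNIV::'a set) ^ vector_space.dim vsmult V"
proof -
  interpret vector_space "vsmult :: 'a \<Rightarrow> _" by (rule vector_space_vsmult)
  obtain B where B: "B \<subseteq> V" "independent B" "V \<subseteq> span B" "card B = dim V"
    using basis_exists by blast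
  have VB: "V = span B" using B span_minimal[OF B(1) sub] by blast
  have finB: "finite B" using B(1) fin finite_subset by blast
  define L where "L c = (\<Sum>b\<in>B. vsmult (c b) b)" for c
  have "span B = range L" unfolding L_def by (rule span_finite[OF finB])
  also have "\<dots> = L ` (PiE B (\<lambda>_. UNIV))"
  proof
    show "range L \<subseteq> L ` (PiE B (\<lambda>_. UNIV))"
    proof
      fix x assume "x \<in> range L"
      then obtain c where x: "x = L c" by blast
      have "L c = L (restrict c B)" unfolding L_def by (rule sum.cong) auto
      moreover have "restrict c B \<in> PiE B (\<lambda>_. UNIV)" by auto
      ultimately show "x \<in> L ` (PiE B (\<lambda>_. UNIV))" using x by blast
    qed
  qed auto
  finally have V: "V = L ` (PiE B (\<lambda>_. UNIV))" using VB by simp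
  have inj: "inj_on L (PiE B (\<lambda>_. UNIV))"
  proof (rule inj_onI)
    fix c c' assume c: "c \<in> PiE B (\<lambda>_. UNIV)" and c': "c' \<in> PiE B (\<lambda>_. UNIV)" and eq: "L c = L c'"
    have "(\<Sum>b\<in>B. vsmult (c b - c' b) b) = L c - L c'"
      unfolding L_def by (simp add: scale_left_diff_distrib sum_subtractf)
    hence z: "(\<Sum>b\<in>B. vsmult (c b - c' b) b) = 0" using eq by simp
    have "c b = c' b" for b
    proof (cases "b \<in> B")
      case True
      have "c b - c' b = 0"
        using independentD[OF B(2) finB subset_refl z True] by simp
      thus ?thesis by simp
    next
      case False thus ?thesis using c c' by (simp add: PiE_def extensional_def)
    qed
    thus "c = c'" by auto
  qed
  have "card V = card (PiE B (\<lambda>_. (UNIV::'a set)))" using V card_image[OF inj] by simp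
  also have "\<dots> = card (UNIV::'a set) ^ card B" by (subst card_PiE[OF finB]) simp
  finally show ?thesis using B(4) by simp
qed



definition E2 :: "nat \<Rightarrow> 'a::field \<Rightarrow> 'a \<Rightarrow> (nat\<Rightarrow>'a) \<Rightarrow> (nat\<Rightarrow>'a) \<Rightarrow> (nat\<Rightarrow>'a)" where
  "E2 m a b u v = (\<lambda>i. if i < m then u i + v i else if i < 2*m then a * u (i-m) + b * v (i-m) else 0)"

lemma E2_add: "E2 m a b u v + E2 m a b u' v' = E2 m a b (u + u') (v + v')"
  by (auto simp: E2_def fun_eq_iff algebra_simps)

lemma E2_smult: "vsmult c (E2 m a b u v) = E2 m a b (vsmult c u) (vsmult c v)"
  by (auto simp: E2_def fun_eq_iff algebra_simps vsmult_def)

lemma E2_zero: "E2 m a b 0 0 = 0"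
  by (auto simp: E2_def fun_eq_iff)

lemma E2_vecs: "E2 m a b u v \<in> vecs (2*m)"
  unfolding vecs_def E2_def by simp

lemma E2_inj:
  assumes "a \<noteq> b" "u \<in> vecs m" "v \<in> vecs m" "u' \<in> vecs m" "v' \<in> vecs m"
    and eq: "E2 m a b u v = E2 m a b u' v'"
  shows "u = u' \<and> v = v'"
proof -
  have "u i = u' i \<and> v i = v' i" for i
  proof (cases "i < m")
    case True
    have e1: "u i + v i = u' i + v' i" using fun_cong[OF eq, of i] True by (simp add: E2_def)
    have e2: "a * u i + b * v i = a * u' i + b * v' i" using fun_cong[OF eq, of "i+m"] True
      by (simp add: E2_def)
    have "(b - a) * (v i - v' i) = (a * u i + b * v i) - (a * u' i + b * v' i) - a * ((u i + v i) - (u' i + v' i))"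
      by (simp add: algebra_simps)
    hence "(b - a) * (v i - v' i) = 0" using e1 e2 by simp
    hence "v i = v' i" using assms(1) by simp
    thus ?thesis using e1 by simp
  next
    case False thus ?thesis using assms(2-5) by (simp add: vecs_def)
  qed
  thus ?thesis by (auto simp: fun_eq_iff)
qed

lemma sum_split2: fixes m n :: nat shows "(\<Sum>i<m+n. f i) = (\<Sum>i<m. f i) + (\<Sum>i<n. (f (m+i) :: 'a::comm_monoid_add))"
  by (induction n) (simp_all add: add.assoc)

lemma card_split2: fixes m :: nat shows "card {i. i < 2*m \<and> P i} = card {i. i < m \<and> P i} + card {i. i < m \<and> P (i+m)}"
proof -
  have "{i. i < 2*m \<and> P i} = {i. i < m \<and> P i} \<union> (\<lambda>i. i+m) ` {i. i < m \<and> P (i+m)}"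
    (is "_ = ?A \<union> ?B")
  proof
    show "{i. i < 2*m \<and> P i} \<subseteq> ?A \<union> ?B"
    proof
      fix x assume x: "x \<in> {i. i < 2*m \<and> P i}"
      show "x \<in> ?A \<union> ?B"
      proof (cases "x < m")
        case False
        hence "x = (x - m) + m" "x - m < m" "P ((x-m)+m)" using x by auto
        thus ?thesis by blast
      qed (use x in auto)
    qed
  qed auto
  moreover have "?A \<inter> ?B = {}" by auto
  moreover have "card ?B = card {i. i < m \<and> P (i+m)}" by (rule card_image) (auto simp: inj_on_def)
  ultimately show ?thesis by (simp add: card_Un_disjoint)
qed

lemma E2_weight:
  fixes u v :: "nat \<Rightarrow> 'a::field"
  shows "hweight (2*m) (E2 m a b u v) = card {i. i < m \<and> u i + v i \<noteq> 0} + card {i. i < m \<and> a * u i + b * v i \<noteq> 0}"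
  unfolding hweight_def card_split2
  by (simp add: E2_def) (intro arg_cong2[where f="(+)"] arg_cong[where f=card]; auto)

lemma E2_weight_v:
  fixes u v :: "nat \<Rightarrow> 'a::field"
  assumes "a \<noteq> b"
  shows "hweight m v \<le> hweight (2*m) (E2 m a b u v)"
proof -
  let ?A = "{i. i < m \<and> u i + v i \<noteq> 0}" and ?B = "{i. i < m \<and> a * u i + b * v i \<noteq> 0}"
  have "{i. i < m \<and> v i \<noteq> 0} \<subseteq> ?A \<union> ?B"
  proof
    fix i assume i: "i \<in> {i. i < m \<and> v i \<noteq> 0}"
    show "i \<in> ?A \<union> ?B"
    proof (rule ccontr)
      assume "i \<notin> ?A \<union> ?B"
      hence "u i + v i = 0" "a * u i + b * v i = 0" using i by auto
      hence "u i = - v i" "a * u i + b * v i = 0" by (simp_all add: eq_neg_iff_add_eq_0)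
      hence "(b - a) * v i = 0" by (simp add: algebra_simps)
      thus False using i assms by simp
    qed
  qed
  hence "hweight m v \<le> card (?A \<union> ?B)" unfolding hweight_def by (rule card_mono[rotated]) auto
  also have "\<dots> \<le> card ?A + card ?B" by (rule card_Un_le)
  finally show ?thesis by (simp add: E2_weight)
qed

lemma E2_weight_u:
  fixes u :: "nat \<Rightarrow> 'a::field"
  assumes "a \<noteq> 0"
  shows "hweight (2*m) (E2 m a b u 0) = 2 * hweight m u"
  using assms unfolding E2_weight by (simp add: hweight_def)

lemma E2_ip:
  fixes u v u' v' :: "nat \<Rightarrow> 'a::field"
  assumes fd: "\<And>x y :: 'a. (x + y) ^ r = x ^ r + y ^ r"
    and ha: "a * a ^ r = -1" and hb: "b * b ^ r = -1"
  shows "herm_ip r (2*m) (E2 m a b u v) (E2 m a b u' v') =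
     (1 + a * b ^ r) * herm_ip r m u v' + (1 + b * a ^ r) * herm_ip r m v u'"
proof -
  have pt: "(x+y)*(x'+y')^r + (a*x+b*y)*(a*x'+b*y')^r = (1+a*b^r)*(x*y'^r) + (1+b*a^r)*(y*x'^r)"
    for x y x' y' :: 'a
  proof -
    have "(x+y)*(x'+y')^r + (a*x+b*y)*(a*x'+b*y')^r
       = (x+y)*(x'^r+y'^r) + (a*x+b*y)*(a^r*x'^r+b^r*y'^r)"
      by (simp add: fd power_mult_distrib)
    also have "\<dots> = x*x'^r*(1 + a*a^r) + y*y'^r*(1+b*b^r) + (1+a*b^r)*(x*y'^r) + (1+b*a^r)*(y*x'^r)"
      by (simp add: algebra_simps)
    finally show ?thesis using ha hb by simp
  qed
  have "herm_ip r (2*m) (E2 m a b u v) (E2 m a b u' v') =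
     (\<Sum>i<m. (u i + v i) * (u' i + v' i) ^ r) + (\<Sum>i<m. (a * u i + b * v i) * (a * u' i + b * v' i) ^ r)"
    unfolding herm_ip_def mult_2 sum_split2 by (simp add: E2_def)
  also have "\<dots> = (\<Sum>i<m. (u i + v i) * (u' i + v' i) ^ r + (a * u i + b * v i) * (a * u' i + b * v' i) ^ r)"
    by (simp add: sum.distrib)
  also have "\<dots> = (\<Sum>i<m. (1+a*b^r)*(u i*v' i^r) + (1+b*a^r)*(v i*u' i^r))"
    by (simp only: pt)
  also have "\<dots> = (1 + a * b ^ r) * herm_ip r m u v' + (1 + b * a ^ r) * herm_ip r m v u'"
    by (simp add: herm_ip_def sum.distrib sum_distrib_left)
  finally show ?thesis .
qed



theorem corollary4p3:
  fixes C1 C2 :: "(nat \<Rightarrow> 'a::{finite,field}) set"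
    and r m k1 k2 d1 d2 :: nat
  assumes "prime_power r"
    and "card (UNIV :: 'a set) = r ^ 2"
    and "is_nkd_code m k1 d1 C1"
    and "is_nkd_code m k2 d2 C2"
    and "C1 \<subseteq> herm_dual r m C2"
  shows "\<exists>(C :: (nat \<Rightarrow> 'a) set) d. is_nkd_code (2 * m) (k1 + k2) d C
           \<and> herm_self_orth r (2 * m) C \<and> d \<ge> min (2 * d1) d2"
proof -
  interpret V: vector_space "vsmult :: 'a \<Rightarrow> _" by (rule vector_space_vsmult)
  obtain p e where pe: "prime p" "e > 0" "r = p ^ e" using assms(1) unfolding prime_power_def by blast
  have "p ^ 1 \<le> p ^ e" using pe by (intro power_increasing) (use prime_gt_0_nat[of p] in auto)
  hence r2: "r \<ge> 2" using pe prime_ge_2_nat[of p] by simp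
  have cardq: "card (UNIV :: 'a set) = r * r" using assms(2) by (simp add: power2_eq_square)
  have ch: "CHAR('a) = p" using ff_char[OF pe(1) pe(2)] assms(2) pe(3) by blast
  have prc: "prime CHAR('a)" using ch pe(1) by simp
  have fd: "(x + y) ^ r = x ^ r + y ^ r" for x y :: 'a
    using freshmans_dream'[OF prc, of r e] ch pe(3) by simp
  have fs: "sum f A ^ r = (\<Sum>i\<in>A. f i ^ r)" for f :: "nat \<Rightarrow> 'a" and A
    using freshmans_dream_sum'[OF prc, of r e] ch pe(3) by simp
  have m1: "(-1 :: 'a) ^ r = -1"
  proof -
    have "(1 + (-1::'a)) ^ r = 1 ^ r + (-1) ^ r" by (rule fd)
    hence "0 = 1 + (-1::'a) ^ r" using r2 by (simp add: power_0_left)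
    thus ?thesis by (metis add.commute add_eq_0_iff)
  qed
  have rr: "x ^ (r * r) = x" for x :: 'a using ff_power_card[of x] cardq by simp
  obtain a b :: 'a where ab: "a \<noteq> b" "a ^ (r+1) = -1" "b ^ (r+1) = -1"
    using norm_sols[OF r2 cardq m1] by blast
  have ha: "a * a ^ r = -1" and hb: "b * b ^ r = -1" using ab by simp_all
  have a0: "a \<noteq> 0" using ha by auto
  note c1 = assms(3)[unfolded is_nkd_code_def linear_code_def code_dim_def]
  note c2 = assms(4)[unfolded is_nkd_code_def linear_code_def code_dim_def]
  have s1: "0 \<in> C1" "\<And>x y. x \<in> C1 \<Longrightarrow> y \<in> C1 \<Longrightarrow> x + y \<in> C1" "\<And>c x. x \<in> C1 \<Longrightarrow> vsmult c x \<in> C1"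
    using c1 unfolding V.subspace_def by auto
  have s2: "0 \<in> C2" "\<And>x y. x \<in> C2 \<Longrightarrow> y \<in> C2 \<Longrightarrow> x + y \<in> C2" "\<And>c x. x \<in> C2 \<Longrightarrow> vsmult c x \<in> C2"
    using c2 unfolding V.subspace_def by auto
  define C where "C = (\<lambda>(u,v). E2 m a b u v) ` (C1 \<times> C2)"
  have Cmem: "w \<in> C \<longleftrightarrow> (\<exists>u\<in>C1. \<exists>v\<in>C2. w = E2 m a b u v)" for w
    unfolding C_def by auto
  have Cvecs: "C \<subseteq> vecs (2*m)" unfolding C_def using E2_vecs by auto
  have Csub: "V.subspace C"
    unfolding V.subspace_def
  proof (intro conjI ballI allI)
    show "0 \<in> C" using Cmem E2_zero s1(1) s2(1) by metis
  next
    fix x y assume "x \<in> C" "y \<in> C"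
    then obtain u v u' v' where "u \<in> C1" "v \<in> C2" "u' \<in> C1" "v' \<in> C2"
      "x = E2 m a b u v" "y = E2 m a b u' v'" using Cmem by metis
    thus "x + y \<in> C" using Cmem E2_add s1(2) s2(2) by metis
  next
    fix c x assume "x \<in> C"
    then obtain u v where "u \<in> C1" "v \<in> C2" "x = E2 m a b u v" using Cmem by metis
    thus "vsmult c x \<in> C" using Cmem E2_smult s1(3) s2(3) by metis
  qed
  have finC1: "finite C1" using c1 vecs_finite finite_subset by blast
  have finC2: "finite C2" using c2 vecs_finite finite_subset by blast
  have finC: "finite C" using Cvecs vecs_finite finite_subset by blast
  have inj: "inj_on (\<lambda>(u,v). E2 m a b u v) (C1 \<times> C2)"
  proof (rule inj_onI, clarify)
    fix x y x' y' assume h: "x \<in> C1" "y \<in> C2" "x' \<in> C1" "y' \<in> C2" "E2 m a b x y = E2 m a b x' y'"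
    have "x \<in> vecs m" "y \<in> vecs m" "x' \<in> vecs m" "y' \<in> vecs m" using h c1 c2 by auto
    thus "x = x' \<and> y = y'" using E2_inj[OF ab(1) _ _ _ _ h(5)] by blast
  qed
  have "card C = card C1 * card C2" unfolding C_def
    by (simp add: card_image[OF inj] card_cartesian_product)
  hence "card (UNIV::'a set) ^ V.dim C = card (UNIV::'a set) ^ k1 * card (UNIV::'a set) ^ k2"
    using card_subspace[OF Csub finC] card_subspace[OF _ finC1] card_subspace[OF _ finC2] c1 c2 by simp
  hence "card (UNIV::'a set) ^ V.dim C = card (UNIV::'a set) ^ (k1 + k2)" by (simp add: power_add)
  moreover have "2*2 \<le> r * r" using r2 by (intro mult_le_mono) auto
  hence "card (UNIV::'a set) > 1" using cardq by simp
  ultimately have dimC: "V.dim C = k1 + k2" using power_inject_exp by blast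
  have o1: "herm_ip r m v u = 0" if "v \<in> C2" "u \<in> C1" for u v
    using assms(5) that unfolding herm_dual_def by auto
  have o2: "herm_ip r m u v = 0" if "v \<in> C2" "u \<in> C1" for u v
  proof -
    have "(herm_ip r m u v) ^ r = (\<Sum>i<m. (u i * v i ^ r) ^ r)" unfolding herm_ip_def by (rule fs)
    also have "\<dots> = (\<Sum>i<m. v i * u i ^ r)"
      by (simp add: power_mult_distrib rr flip: power_mult mult.commute)
    also have "\<dots> = 0" using o1[OF that] unfolding herm_ip_def .
    finally show ?thesis using r2 by simp
  qed
  have orth: "herm_self_orth r (2*m) C"
    unfolding herm_self_orth_def herm_dual_def
  proof (intro subsetI CollectI conjI ballI)
    fix w' assume "w' \<in> C"
    thus "w' \<in> vecs (2*m)" using Cvecs by auto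
    fix w assume "w \<in> C"
    obtain u v where uv: "u \<in> C1" "v \<in> C2" "w = E2 m a b u v" using \<open>w \<in> C\<close> Cmem by metis
    obtain u' v' where uv': "u' \<in> C1" "v' \<in> C2" "w' = E2 m a b u' v'" using \<open>w' \<in> C\<close> Cmem by metis
    show "herm_ip r (2*m) w w' = 0"
      using E2_ip[OF fd ha hb, of m u v u' v'] uv uv' o1 o2 by simp
  qed
  define d where "d = min_dist (2*m) C"
  have dist: "min (2*d1) d2 \<le> d"
  proof (cases "C - {0} = {}")
    case True
    have "C2 - {0} = {}"
    proof (rule ccontr)
      assume "C2 - {0} \<noteq> {}"
      then obtain v where v: "v \<in> C2" "v \<noteq> 0" by blast
      have "E2 m a b 0 v \<in> C" using Cmem v(1) s1(1) by blast
      moreover have "E2 m a b 0 v \<noteq> 0"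
      proof
        assume "E2 m a b 0 v = 0"
        hence "E2 m a b 0 v = E2 m a b 0 0" by (simp add: E2_zero)
        moreover have "v \<in> vecs m" using v c2 by blast
        moreover have "(0::nat\<Rightarrow>'a) \<in> vecs m" by (simp add: vecs_def)
        ultimately have "v = 0" using E2_inj[OF ab(1), of 0 m v 0 0] by blast
        thus False using v by simp
      qed
      ultimately show False using True by blast
    qed
    hence e: "hweight m ` (C2 - {0}) = {}" by blast
    have e2: "hweight (2*m) ` (C - {0}) = {}" using True by blast
    have "d2 = Inf (hweight m ` (C2 - {0}))" using c2 unfolding min_dist_def by simp
    hence "d2 = d" unfolding e d_def min_dist_def e2 by simp
    thus ?thesis by simp
  next
    case False
    show ?thesis unfolding d_def min_dist_def
    proof (rule cInf_greatest)
      show "hweight (2*m) ` (C - {0}) \<noteq> {}" using False by blast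
      fix x assume "x \<in> hweight (2*m) ` (C - {0})"
      then obtain w where w: "w \<in> C" "w \<noteq> 0" "x = hweight (2*m) w" by blast
      then obtain u v where uv: "u \<in> C1" "v \<in> C2" "w = E2 m a b u v" using Cmem by metis
      show "min (2*d1) d2 \<le> x"
      proof (cases "v = 0")
        case True
        hence "u \<noteq> 0" using w(2) uv(3) E2_zero[of m a b] by auto
        hence "Inf (hweight m ` (C1 - {0})) \<le> hweight m u"
          by (intro cInf_lower) (use uv(1) in \<open>auto intro: bdd_belowI[of _ 0]\<close>)
        hence "d1 \<le> hweight m u" using c1 unfolding min_dist_def by simp
        moreover have "x = 2 * hweight m u" using w uv True E2_weight_u[OF a0] by simp
        ultimately show ?thesis by simp
      next
        case False
        hence "Inf (hweight m ` (C2 - {0})) \<le> hweight m v"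
          by (intro cInf_lower) (use uv(2) in \<open>auto intro: bdd_belowI[of _ 0]\<close>)
        hence "d2 \<le> hweight m v" using c2 unfolding min_dist_def by simp
        moreover have "hweight m v \<le> x" using w uv E2_weight_v[OF ab(1)] by simp
        ultimately show ?thesis by simp
      qed
    qed
  qed
  have "is_nkd_code (2*m) (k1+k2) d C"
    unfolding is_nkd_code_def linear_code_def code_dim_def d_def using Cvecs Csub dimC by simp
  thus ?thesis using orth dist by blast
qed

end
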